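(* Let $\mathcal{X}=\mathcal{X}^{(1)}\times\cdots\times\mathcal{X}^{(d)}$ with each $\mathcal{X}^{(j)}$ finite, and let $(S_i)_{i=1}^n$ be a partition of $\{1,\dots,d\}$ into pairwise disjoint nonempty sets. Let $\pi\in\mathcal{P}(\mathcal{X})$ be positive, $P\in\mathcal{L}(\mathcal{X})$ and $L_i\in\mathcal{L}(\mathcal{X}^{(S_i)})$ for $i=1,\dots,n$. Then $D^\pi_{KL}(P\|\otimes_{i=1}^nL_i)=D^\pi_{KL}(P\|\otimes_{i=1}^nP^{(S_i)}_\pi)+D^\pi_{KL}(\otimes_{i=1}^nP^{(S_i)}_\pi\|\otimes_{i=1}^nL_i)=D^\pi_{KL}(P\|\otimes_{i=1}^nP^{(S_i)}_\pi)+\sum_{i=1}^nD^{\pi^{(S_i)}}_{KL}(P^{(S_i)}_\pi\|L_i)$. Consequently $\otimes_{i=1}^nP^{(S_i)}_\pi$ is the unique minimizer and $\min_{L_i\in\mathcal{L}(\mathcal{X}^{(S_i)})}D^\pi_{KL}(P\|\otimes_{i=1}^nL_i)=D^\pi_{KL}(P\|\otimes_{i=1}^nP^{(S_i)}_\pi)$.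
   Context: $\mathcal{P}(\Omega),\mathcal{L}(\Omega)$: probability masses and transition matrices on finite $\Omega$. $D_{KL}^{\pi}(M\|L):=\sum_{x,y}\pi(x)M(x,y)\ln\frac{M(x,y)}{L(x,y)}$. For $S\subseteq\{1,\dots,d\}$: $\mathcal{X}^{(S)}=\prod_{j\in S}\mathcal{X}^{(j)}$, $x^{(S)}=(x^j)_{j\in S}$, $x^{(-S)}=(x^j)_{j\notin S}$, $\pi^{(S)}(x^{(S)})=\sum_{x^{(-S)}}\pi(x)$, $P^{(S)}_\pi(x^{(S)},y^{(S)}):=\frac{\sum_{x^{(-S)},y^{(-S)}}\pi(x)P(x,y)}{\pi^{(S)}(x^{(S)})}$. For $L_i\in\mathcal{L}(\mathcal{X}^{(S_i)})$, $(\otimes_{i=1}^nL_i)(x,y):=\prod_{i=1}^nL_i(x^{(S_i)},y^{(S_i)})$. *)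

theory Defs
  imports "HOL-Analysis.Analysis" "HOL-Library.FuncSet"
begin

definition prob_mass :: "'s set \<Rightarrow> ('s \<Rightarrow> real) \<Rightarrow> bool" where
  "prob_mass \<Omega> \<pi> \<longleftrightarrow> (\<forall>x\<in>\<Omega>. 0 \<le> \<pi> x) \<and> (\<Sum>x\<in>\<Omega>. \<pi> x) = 1"

definition trans_matrix :: "'s set \<Rightarrow> ('s \<Rightarrow> 's \<Rightarrow> real) \<Rightarrow> bool" where
  "trans_matrix \<Omega> M \<longleftrightarrow> (\<forall>x\<in>\<Omega>. \<forall>y\<in>\<Omega>. 0 \<le> M x y) \<and> (\<forall>x\<in>\<Omega>. (\<Sum>y\<in>\<Omega>. M x y) = 1)"

definition kl_term :: "real \<Rightarrow> real \<Rightarrow> real \<Rightarrow> ereal" where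
  "kl_term w m l = (if w * m = 0 then 0 else if l = 0 then \<infinity> else ereal (w * m * ln (m / l)))"

definition KL :: "'s set \<Rightarrow> ('s \<Rightarrow> real) \<Rightarrow> ('s \<Rightarrow> 's \<Rightarrow> real) \<Rightarrow> ('s \<Rightarrow> 's \<Rightarrow> real) \<Rightarrow> ereal" where
  "KL \<Omega> \<pi> M L = (\<Sum>x\<in>\<Omega>. \<Sum>y\<in>\<Omega>. kl_term (\<pi> x) (M x y) (L x y))"

text \<open>Product state space: states are extensional functions on the coordinate set.
  \<open>X\<^sup>(S) = PiE S X\<close>, \<open>x\<^sup>(S) = restrict x S\<close>, full space \<open>PiE {1..d} X\<close>.\<close>

definition marg_pi :: "nat \<Rightarrow> (nat \<Rightarrow> 'a set) \<Rightarrow> nat set \<Rightarrow> ((nat \<Rightarrow> 'a) \<Rightarrow> real) \<Rightarrow> (nat \<Rightarrow> 'a) \<Rightarrow> real" where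
  "marg_pi d X S \<pi> u = (\<Sum>x\<in>{x\<in>PiE {1..d} X. restrict x S = u}. \<pi> x)"

definition marg_P :: "nat \<Rightarrow> (nat \<Rightarrow> 'a set) \<Rightarrow> nat set \<Rightarrow> ((nat \<Rightarrow> 'a) \<Rightarrow> real)
    \<Rightarrow> ((nat \<Rightarrow> 'a) \<Rightarrow> (nat \<Rightarrow> 'a) \<Rightarrow> real) \<Rightarrow> (nat \<Rightarrow> 'a) \<Rightarrow> (nat \<Rightarrow> 'a) \<Rightarrow> real" where
  "marg_P d X S \<pi> P u v =
     (\<Sum>x\<in>{x\<in>PiE {1..d} X. restrict x S = u}. \<Sum>y\<in>{y\<in>PiE {1..d} X. restrict y S = v}. \<pi> x * P x y)
       / marg_pi d X S \<pi> u"

definition tensor :: "nat \<Rightarrow> (nat \<Rightarrow> nat set) \<Rightarrow> (nat \<Rightarrow> (nat \<Rightarrow> 'a) \<Rightarrow> (nat \<Rightarrow> 'a) \<Rightarrow> real)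
    \<Rightarrow> (nat \<Rightarrow> 'a) \<Rightarrow> (nat \<Rightarrow> 'a) \<Rightarrow> real" where
  "tensor n S L x y = (\<Prod>i\<in>{1..n}. L i (restrict x (S i)) (restrict y (S i)))"

end

theory Submission
  imports Defs
begin


lemma ereal_sum_if:
  assumes "finite A"
  shows "(\<Sum>a\<in>A. if B a then (\<infinity>::ereal) else ereal (f a)) = (if \<exists>a\<in>A. B a then \<infinity> else ereal (\<Sum>a\<in>A. f a))"
  using assms by (induction A rule: finite_induct) auto

lemma kl_term_alt: "kl_term w m l = (if w * m \<noteq> 0 \<and> l = 0 then \<infinity> else ereal (w * m * ln (m / l)))"
  unfolding kl_term_def by auto

lemma KL_alt:
  assumes "finite \<Omega>"
  shows "KL \<Omega> \<pi> M N = (if \<exists>x\<in>\<Omega>. \<exists>y\<in>\<Omega>. \<pi> x * M x y \<noteq> 0 \<and> N x y = 0 then \<infinity>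
     else ereal (\<Sum>x\<in>\<Omega>. \<Sum>y\<in>\<Omega>. \<pi> x * M x y * ln (M x y / N x y)))"
proof -
  have "KL \<Omega> \<pi> M N = (\<Sum>x\<in>\<Omega>. if \<exists>y\<in>\<Omega>. \<pi> x * M x y \<noteq> 0 \<and> N x y = 0 then \<infinity>
     else ereal (\<Sum>y\<in>\<Omega>. \<pi> x * M x y * ln (M x y / N x y)))"
    unfolding KL_def kl_term_alt using assms by (intro sum.cong refl ereal_sum_if)
  also have "\<dots> = (if \<exists>x\<in>\<Omega>. \<exists>y\<in>\<Omega>. \<pi> x * M x y \<noteq> 0 \<and> N x y = 0 then \<infinity>
     else ereal (\<Sum>x\<in>\<Omega>. \<Sum>y\<in>\<Omega>. \<pi> x * M x y * ln (M x y / N x y)))"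
    using assms by (rule ereal_sum_if)
  finally show ?thesis .
qed

lemma gibbs:
  fixes p q :: "'b \<Rightarrow> real"
  assumes "finite A" "\<And>a. a \<in> A \<Longrightarrow> p a \<ge> 0" "\<And>a. a \<in> A \<Longrightarrow> q a \<ge> 0"
    "sum p A = 1" "sum q A = 1" "\<And>a. a \<in> A \<Longrightarrow> p a \<noteq> 0 \<Longrightarrow> q a \<noteq> 0"
  shows "(\<Sum>a\<in>A. p a * ln (p a / q a)) \<ge> 0"
    and "(\<Sum>a\<in>A. p a * ln (p a / q a)) = 0 \<Longrightarrow> \<forall>a\<in>A. p a = q a"
proof -
  have pt: "p a - q a \<le> p a * ln (p a / q a)" if a: "a \<in> A" for a
  proof (cases "p a = 0")
    case True then show ?thesis using assms(3)[OF a] by simp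
  next
    case False
    then have pp: "p a > 0" "q a > 0" using assms(2,3,6)[OF a] by force+
    have "ln (q a / p a) \<le> q a / p a - 1" using pp by (intro ln_le_minus_one) simp
    then have "p a * ln (q a / p a) \<le> p a * (q a / p a - 1)" using pp by (intro mult_left_mono) auto
    also have "\<dots> = q a - p a" using pp by (simp add: field_simps)
    finally show ?thesis using pp by (simp add: ln_div algebra_simps)
  qed
  have "(\<Sum>a\<in>A. p a - q a) \<le> (\<Sum>a\<in>A. p a * ln (p a / q a))" using pt by (rule sum_mono)
  moreover have "(\<Sum>a\<in>A. p a - q a) = 0" using assms(4,5) by (simp add: sum_subtractf)
  ultimately show "(\<Sum>a\<in>A. p a * ln (p a / q a)) \<ge> 0" by simp
  assume z: "(\<Sum>a\<in>A. p a * ln (p a / q a)) = 0"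
  have "(\<Sum>a\<in>A. p a * ln (p a / q a) - (p a - q a)) = 0"
    using z \<open>(\<Sum>a\<in>A. p a - q a) = 0\<close> by (simp add: sum_subtractf)
  then have eq: "\<forall>a\<in>A. p a * ln (p a / q a) - (p a - q a) = 0"
    using pt by (subst sum_nonneg_eq_0_iff[symmetric]) (auto simp: assms(1))
  show "\<forall>a\<in>A. p a = q a"
  proof
    fix a assume a: "a \<in> A"
    show "p a = q a"
    proof (cases "p a = 0")
      case True then show ?thesis using eq[rule_format, OF a] by simp
    next
      case False
      then have pp: "p a > 0" "q a > 0" using assms(2,3,6)[OF a] by force+
      have "p a * ln (p a / q a) = p a - q a" using eq a by simp
      then have "- p a * ln (q a / p a) = p a - q a" using pp by (simp add: ln_div algebra_simps)
      then have "ln (q a / p a) = q a / p a - 1" using pp by (simp add: field_simps)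
      then have "q a / p a = 1" using pp by (intro ln_eq_minus_one) auto
      then show ?thesis using pp by simp
    qed
  qed
qed




locale kls =
  fixes d n :: nat and X :: "nat \<Rightarrow> 'a set" and S :: "nat \<Rightarrow> nat set"
    and \<pi> :: "(nat \<Rightarrow> 'a) \<Rightarrow> real" and P :: "(nat \<Rightarrow> 'a) \<Rightarrow> (nat \<Rightarrow> 'a) \<Rightarrow> real"
  assumes finX: "\<And>j. j \<in> {1..d} \<Longrightarrow> finite (X j)"
    and S_disj: "\<And>i k. i \<in> {1..n} \<Longrightarrow> k \<in> {1..n} \<Longrightarrow> i \<noteq> k \<Longrightarrow> S i \<inter> S k = {}"
    and S_cover: "(\<Union>i\<in>{1..n}. S i) = {1..d}"
    and pi_mass: "prob_mass (PiE {1..d} X) \<pi>"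
    and pi_pos: "\<And>x. x \<in> PiE {1..d} X \<Longrightarrow> \<pi> x > 0"
    and P_tm: "trans_matrix (PiE {1..d} X) P"
begin

abbreviation "Om \<equiv> PiE {1..d} X"
abbreviation "Oi i \<equiv> PiE (S i) X"
definition "F i u = {x\<in>Om. restrict x (S i) = u}"
abbreviation "PM \<equiv> (\<lambda>i. marg_P d X (S i) \<pi> P)"
abbreviation "pim i \<equiv> marg_pi d X (S i) \<pi>"

lemma fin_Om: "finite Om" using finX by (intro finite_PiE) auto

lemma S_sub: "i \<in> {1..n} \<Longrightarrow> S i \<subseteq> {1..d}" using S_cover by blast

lemma fin_Oi: assumes "i \<in> {1..n}" shows "finite (Oi i)"
proof (rule finite_PiE)
  show "finite (S i)" using S_sub[OF assms] by (rule finite_subset) simp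
  show "\<And>j. j \<in> S i \<Longrightarrow> finite (X j)" using S_sub[OF assms] finX by blast
qed

lemma restr_in: "x \<in> Om \<Longrightarrow> i \<in> {1..n} \<Longrightarrow> restrict x (S i) \<in> Oi i"
  using S_sub[of i] by (auto simp: PiE_def Pi_def simp del: One_nat_def)

lemma F_sub: "F i u \<subseteq> Om" by (auto simp: F_def)
lemma fin_F: "finite (F i u)" using fin_Om F_sub by (rule finite_subset[rotated])

lemma Om_ne: "Om \<noteq> {}"
  using pi_mass unfolding prob_mass_def by auto

lemma X_ne: "j \<in> {1..d} \<Longrightarrow> X j \<noteq> {}"
  using Om_ne by (auto simp: PiE_eq_empty_iff)

lemma F_ne: assumes i: "i \<in> {1..n}" and u: "u \<in> Oi i" shows "F i u \<noteq> {}"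
proof -
  define x where "x = (\<lambda>j. if j \<in> S i then u j else if j \<in> {1..d} then (SOME a. a \<in> X j) else undefined)"
  have "x \<in> Om" using u S_sub[OF i] X_ne some_in_eq
    by (auto simp: x_def PiE_def Pi_def extensional_def)
  moreover have "restrict x (S i) = u" using u by (auto simp: x_def PiE_def extensional_def)
  ultimately show ?thesis by (auto simp: F_def)
qed

lemma pim_def': "pim i u = (\<Sum>x\<in>F i u. \<pi> x)" by (simp add: marg_pi_def F_def)

lemma pim_pos: assumes "i \<in> {1..n}" "u \<in> Oi i" shows "pim i u > 0"
  unfolding pim_def'
proof (rule sum_pos[OF fin_F F_ne[OF assms]])
  fix x assume "x \<in> F i u" then show "0 < \<pi> x" using F_sub pi_pos by blast
qed

lemma pim_PM: "i \<in> {1..n} \<Longrightarrow> u \<in> Oi i \<Longrightarrow>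
   pim i u * PM i u v = (\<Sum>x\<in>F i u. \<Sum>y\<in>F i v. \<pi> x * P x y)"
  using pim_pos[of i u] by (simp add: marg_P_def F_def)

lemma group: assumes i: "i \<in> {1..n}" shows "(\<Sum>x\<in>Om. f x) = (\<Sum>u\<in>Oi i. \<Sum>x\<in>F i u. f x)"
proof -
  have "(\<lambda>x. restrict x (S i)) ` Om \<subseteq> Oi i" using restr_in[OF _ i] by blast
  from sum.group[OF fin_Om fin_Oi[OF i] this, of f] show ?thesis unfolding F_def by simp
qed

lemma P_nonneg: "x \<in> Om \<Longrightarrow> y \<in> Om \<Longrightarrow> P x y \<ge> 0"
  using P_tm by (auto simp: trans_matrix_def)

lemma PM_nonneg: assumes "i \<in> {1..n}" "u \<in> Oi i" shows "PM i u v \<ge> 0"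
proof -
  have "pim i u * PM i u v \<ge> 0" unfolding pim_PM[OF assms]
  proof (intro sum_nonneg)
    fix b c assume "b \<in> F i u" "c \<in> F i v"
    then have b: "b \<in> Om" "c \<in> Om" using F_sub by blast+
    then show "0 \<le> \<pi> b * P b c" using P_nonneg[OF b] pi_pos[OF b(1)] by simp
  qed
  then show ?thesis using pim_pos[OF assms] by (simp add: zero_le_mult_iff)
qed

lemma PM_row: assumes i: "i \<in> {1..n}" and u: "u \<in> Oi i" shows "(\<Sum>v\<in>Oi i. PM i u v) = 1"
proof -
  have "pim i u * (\<Sum>v\<in>Oi i. PM i u v) = (\<Sum>v\<in>Oi i. \<Sum>x\<in>F i u. \<Sum>y\<in>F i v. \<pi> x * P x y)"
    by (simp add: sum_distrib_left pim_PM[OF i u])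
  also have "\<dots> = (\<Sum>x\<in>F i u. \<Sum>v\<in>Oi i. \<Sum>y\<in>F i v. \<pi> x * P x y)" by (rule sum.swap)
  also have "\<dots> = (\<Sum>x\<in>F i u. \<Sum>y\<in>Om. \<pi> x * P x y)" using group[OF i, symmetric] by (rule sum.cong[OF refl])
  also have "\<dots> = (\<Sum>x\<in>F i u. \<pi> x)"
  proof (rule sum.cong[OF refl])
    fix x assume "x \<in> F i u"
    then have "x \<in> Om" using F_sub by auto
    then show "(\<Sum>y\<in>Om. \<pi> x * P x y) = \<pi> x" using P_tm by (simp add: trans_matrix_def sum_distrib_left[symmetric])
  qed
  also have "\<dots> = pim i u" by (simp add: pim_def')
  finally show ?thesis using pim_pos[OF i u] by simp
qed

lemma PM_tm: "i \<in> {1..n} \<Longrightarrow> trans_matrix (Oi i) (PM i)"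
  using PM_nonneg PM_row by (auto simp: trans_matrix_def)

lemma PM_pos: assumes i: "i \<in> {1..n}" and x: "x \<in> Om" and y: "y \<in> Om" and p: "P x y > 0"
  shows "PM i (restrict x (S i)) (restrict y (S i)) > 0"
proof -
  let ?u = "restrict x (S i)" and ?v = "restrict y (S i)"
  have xF: "x \<in> F i ?u" and yF: "y \<in> F i ?v" using x y by (auto simp: F_def)
  have "0 < \<pi> x * P x y" using pi_pos[OF x] p by simp
  also have "\<dots> = (\<Sum>y'\<in>{y}. \<pi> x * P x y')" by simp
  also have "\<dots> \<le> (\<Sum>y'\<in>F i ?v. \<pi> x * P x y')"
  proof (rule sum_mono2[OF fin_F])
    show "{y} \<subseteq> F i ?v" using yF by simp
    fix b assume "b \<in> F i ?v - {y}"
    then have "b \<in> Om" using F_sub by blast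
    then show "0 \<le> \<pi> x * P x b" using P_nonneg[OF x] pi_pos[OF x] by simp
  qed
  also have "\<dots> = (\<Sum>x'\<in>{x}. \<Sum>y'\<in>F i ?v. \<pi> x' * P x' y')" by simp
  also have "\<dots> \<le> (\<Sum>x'\<in>F i ?u. \<Sum>y'\<in>F i ?v. \<pi> x' * P x' y')"
  proof (rule sum_mono2[OF fin_F])
    show "{x} \<subseteq> F i ?u" using xF by simp
    fix b assume "b \<in> F i ?u - {x}"
    then have b: "b \<in> Om" using F_sub by blast
    show "0 \<le> (\<Sum>y'\<in>F i ?v. \<pi> b * P b y')"
    proof (rule sum_nonneg)
      fix c assume "c \<in> F i ?v"
      then have "c \<in> Om" using F_sub by blast
      then show "0 \<le> \<pi> b * P b c" using P_nonneg[OF b] pi_pos[OF b] by simp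
    qed
  qed
  also have "\<dots> = pim i ?u * PM i ?u ?v" using pim_PM[OF i restr_in[OF x i]] by simp
  finally show ?thesis using pim_pos[OF i restr_in[OF x i]] by (simp add: zero_less_mult_iff)
qed

lemma PM_nz_ex: assumes i: "i \<in> {1..n}" and u: "u \<in> Oi i" and nz: "PM i u v \<noteq> 0"
  shows "\<exists>x\<in>F i u. \<exists>y\<in>F i v. P x y \<noteq> 0"
proof (rule ccontr)
  assume "\<not> ?thesis"
  then have "(\<Sum>x\<in>F i u. \<Sum>y\<in>F i v. \<pi> x * P x y) = 0" by auto
  then have "pim i u * PM i u v = 0" using pim_PM[OF i u] by simp
  then show False using pim_pos[OF i u] nz by simp
qed

end

context kls begin

definition "idx j = (THE k. k \<in> {1..n} \<and> j \<in> S k)"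

lemma idx_eq: assumes "k \<in> {1..n}" "j \<in> S k" shows "idx j = k"
  unfolding idx_def
proof (rule the_equality)
  show "k \<in> {1..n} \<and> j \<in> S k" using assms by simp
  fix k' assume "k' \<in> {1..n} \<and> j \<in> S k'"
  then show "k' = k" using S_disj[of k' k] assms by blast
qed

lemma idx_in: assumes "j \<in> {1..d}" shows "idx j \<in> {1..n}" "j \<in> S (idx j)"
proof -
  obtain k where "k \<in> {1..n}" "j \<in> S k" using assms S_cover by blast
  then show "idx j \<in> {1..n}" "j \<in> S (idx j)" using idx_eq by auto
qed

definition "phi y = (\<lambda>k\<in>{1..n}. restrict y (S k))"
definition "psi w = (\<lambda>j\<in>{1..d}. w (idx j) j)"

lemma bij_phi: "bij_betw phi Om (PiE {1..n} Oi)"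
proof (rule bij_betw_byWitness[where f'=psi])
  show "\<forall>y\<in>Om. psi (phi y) = y"
  proof
    fix y assume y: "y \<in> Om"
    show "psi (phi y) = y"
    proof
      fix j show "psi (phi y) j = y j"
        using y idx_in[of j] by (auto simp: psi_def phi_def PiE_def extensional_def)
    qed
  qed
  show "\<forall>w\<in>PiE {1..n} Oi. phi (psi w) = w"
  proof
    fix w assume w: "w \<in> PiE {1..n} Oi"
    show "phi (psi w) = w"
    proof
      fix k show "phi (psi w) k = w k"
      proof (cases "k \<in> {1..n}")
        case True
        show ?thesis
        proof
          fix j show "phi (psi w) k j = w k j"
          proof (cases "j \<in> S k")
            case jS: True
            then have "j \<in> {1..d}" using S_sub[OF True] by blast
            then show ?thesis using jS True idx_eq[OF True jS] by (simp add: phi_def psi_def)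
          next
            case False
            have "w k \<in> Oi k" using w True by blast
            then have "w k j = undefined" using False by (auto simp: PiE_def extensional_def)
            then show ?thesis using False True by (simp add: phi_def)
          qed
        qed
      next
        case False then show ?thesis using w by (auto simp: phi_def PiE_def extensional_def)
      qed
    qed
  qed
  show "phi ` Om \<subseteq> PiE {1..n} Oi"
  proof
    fix z assume "z \<in> phi ` Om"
    then obtain y where y: "y \<in> Om" and z: "z = phi y" by blast
    show "z \<in> PiE {1..n} Oi" unfolding z phi_def using restr_in[OF y] by (auto simp del: One_nat_def)
  qed
  show "psi ` PiE {1..n} Oi \<subseteq> Om"
  proof
    fix z assume "z \<in> psi ` PiE {1..n} Oi"
    then obtain w where w: "w \<in> PiE {1..n} Oi" and z: "z = psi w" by blast
    have "w (idx j) j \<in> X j" if j: "j \<in> {1..d}" for j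
    proof -
      have "w (idx j) \<in> Oi (idx j)" using w idx_in[OF j] by blast
      then show ?thesis using idx_in[OF j] by blast
    qed
    then show "z \<in> Om" unfolding z psi_def by (auto simp del: One_nat_def)
  qed
qed

lemma prod_fact:
  "(\<Sum>y\<in>Om. \<Prod>k\<in>{1..n}. g k (restrict y (S k))) = (\<Prod>k\<in>{1..n}. \<Sum>w\<in>Oi k. (g k w :: real))"
proof -
  have "(\<Prod>k\<in>{1..n}. \<Sum>w\<in>Oi k. g k w) = (\<Sum>w\<in>PiE {1..n} Oi. \<Prod>k\<in>{1..n}. g k (w k))"
    using fin_Oi by (intro prod_sum_PiE) auto
  also have "\<dots> = (\<Sum>y\<in>Om. \<Prod>k\<in>{1..n}. g k (phi y k))"
    using sum.reindex_bij_betw[OF bij_phi, of "\<lambda>w. \<Prod>k\<in>{1..n}. g k (w k)"] by simp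
  also have "\<dots> = (\<Sum>y\<in>Om. \<Prod>k\<in>{1..n}. g k (restrict y (S k)))"
    by (intro sum.cong prod.cong refl) (simp add: phi_def)
  finally show ?thesis by simp
qed

end

context kls begin

lemma TPM_fiber:
  assumes i: "i \<in> {1..n}" and x: "x \<in> Om" and v: "v \<in> Oi i"
  shows "(\<Sum>y\<in>F i v. tensor n S PM x y) = PM i (restrict x (S i)) v"
proof -
  define g where "g k w = PM k (restrict x (S k)) w * (if k = i then (if w = v then 1 else 0) else (1::real))" for k w
  have "(\<Sum>y\<in>F i v. tensor n S PM x y) = (\<Sum>y\<in>Om. if restrict y (S i) = v then tensor n S PM x y else 0)"
    unfolding F_def using fin_Om by (rule sum.inter_filter)
  also have "\<dots> = (\<Sum>y\<in>Om. \<Prod>k\<in>{1..n}. g k (restrict y (S k)))"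
  proof (rule sum.cong[OF refl])
    fix y
    have "(\<Prod>k\<in>{1..n}. g k (restrict y (S k))) =
      (\<Prod>k\<in>{1..n}. PM k (restrict x (S k)) (restrict y (S k))) *
      (\<Prod>k\<in>{1..n}. if k = i then (if restrict y (S k) = v then 1 else 0) else 1)"
      unfolding g_def by (rule prod.distrib)
    also have "(\<Prod>k\<in>{1..n}. if k = i then (if restrict y (S k) = v then 1 else 0) else (1::real))
        = (if restrict y (S i) = v then 1 else 0)"
      using i by (subst prod.delta) auto
    finally have "(\<Prod>k\<in>{1..n}. g k (restrict y (S k))) = (\<Prod>k\<in>{1..n}. PM k (restrict x (S k)) (restrict y (S k))) * (if restrict y (S i) = v then 1 else 0)" .
    then show "(if restrict y (S i) = v then tensor n S PM x y else 0) = (\<Prod>k\<in>{1..n}. g k (restrict y (S k)))"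
      unfolding tensor_def by simp
  qed
  also have "\<dots> = (\<Prod>k\<in>{1..n}. \<Sum>w\<in>Oi k. g k w)" by (rule prod_fact)
  also have "\<dots> = (\<Prod>k\<in>{1..n}. if k = i then PM i (restrict x (S i)) v else 1)"
  proof (rule prod.cong[OF refl])
    fix k assume k: "k \<in> {1..n}"
    show "(\<Sum>w\<in>Oi k. g k w) = (if k = i then PM i (restrict x (S i)) v else 1)"
    proof (cases "k = i")
      case True
      have "(\<Sum>w\<in>Oi k. g k w) = (\<Sum>w\<in>Oi i. if w = v then PM i (restrict x (S i)) w else 0)"
        unfolding g_def True by (intro sum.cong) auto
      also have "\<dots> = PM i (restrict x (S i)) v" using v fin_Oi[OF i] by (simp add: sum.delta')
      finally show ?thesis using True by simp
    next
      case False
      then show ?thesis unfolding g_def using PM_row[OF k restr_in[OF x k]] by simp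
    qed
  qed
  also have "\<dots> = PM i (restrict x (S i)) v" using i by (subst prod.delta) auto
  finally show ?thesis .
qed

end

context kls begin

lemma CS:
  assumes i: "i \<in> {1..n}"
  shows "(\<Sum>x\<in>Om. \<Sum>y\<in>Om. \<pi> x * P x y * h (restrict x (S i)) (restrict y (S i)))
       = (\<Sum>u\<in>Oi i. \<Sum>v\<in>Oi i. pim i u * PM i u v * h u v)"
proof -
  have "(\<Sum>x\<in>Om. \<Sum>y\<in>Om. \<pi> x * P x y * h (restrict x (S i)) (restrict y (S i)))
     = (\<Sum>u\<in>Oi i. \<Sum>x\<in>F i u. \<Sum>v\<in>Oi i. \<Sum>y\<in>F i v. \<pi> x * P x y * h u v)"
    apply (subst group[OF i, of "\<lambda>x. \<Sum>y\<in>Om. \<pi> x * P x y * h (restrict x (S i)) (restrict y (S i))"])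
  proof (rule sum.cong[OF refl], rule sum.cong[OF refl])
    fix u x assume "u \<in> Oi i" "x \<in> F i u"
    then have xu: "restrict x (S i) = u" by (simp add: F_def)
    show "(\<Sum>y\<in>Om. \<pi> x * P x y * h (restrict x (S i)) (restrict y (S i)))
        = (\<Sum>v\<in>Oi i. \<Sum>y\<in>F i v. \<pi> x * P x y * h u v)"
      by (subst group[OF i]) (intro sum.cong refl, simp add: F_def xu)
  qed
  also have "\<dots> = (\<Sum>u\<in>Oi i. \<Sum>v\<in>Oi i. \<Sum>x\<in>F i u. \<Sum>y\<in>F i v. \<pi> x * P x y * h u v)"
    by (intro sum.cong refl sum.swap)
  also have "\<dots> = (\<Sum>u\<in>Oi i. \<Sum>v\<in>Oi i. pim i u * PM i u v * h u v)"
  proof (rule sum.cong[OF refl], rule sum.cong[OF refl])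
    fix u v assume u: "u \<in> Oi i" and "v \<in> Oi i"
    show "(\<Sum>x\<in>F i u. \<Sum>y\<in>F i v. \<pi> x * P x y * h u v) = pim i u * PM i u v * h u v"
      unfolding pim_PM[OF i u] by (simp add: sum_distrib_right)
  qed
  finally show ?thesis .
qed

lemma CS2:
  assumes i: "i \<in> {1..n}"
  shows "(\<Sum>x\<in>Om. \<Sum>y\<in>Om. \<pi> x * tensor n S PM x y * h (restrict x (S i)) (restrict y (S i)))
       = (\<Sum>u\<in>Oi i. \<Sum>v\<in>Oi i. pim i u * PM i u v * h u v)"
proof -
  have "(\<Sum>x\<in>Om. \<Sum>y\<in>Om. \<pi> x * tensor n S PM x y * h (restrict x (S i)) (restrict y (S i)))
     = (\<Sum>x\<in>Om. \<Sum>v\<in>Oi i. \<pi> x * PM i (restrict x (S i)) v * h (restrict x (S i)) v)"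
  proof (rule sum.cong[OF refl])
    fix x assume x: "x \<in> Om"
    have "(\<Sum>y\<in>Om. \<pi> x * tensor n S PM x y * h (restrict x (S i)) (restrict y (S i)))
        = (\<Sum>v\<in>Oi i. \<Sum>y\<in>F i v. \<pi> x * tensor n S PM x y * h (restrict x (S i)) v)"
      by (subst group[OF i]) (intro sum.cong refl, simp add: F_def)
    also have "\<dots> = (\<Sum>v\<in>Oi i. \<pi> x * PM i (restrict x (S i)) v * h (restrict x (S i)) v)"
    proof (rule sum.cong[OF refl])
      fix v assume v: "v \<in> Oi i"
      show "(\<Sum>y\<in>F i v. \<pi> x * tensor n S PM x y * h (restrict x (S i)) v)
          = \<pi> x * PM i (restrict x (S i)) v * h (restrict x (S i)) v"
        using TPM_fiber[OF i x v]
        by (simp add: sum_distrib_left[symmetric] sum_distrib_right[symmetric] mult.assoc)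
    qed
    finally show "(\<Sum>y\<in>Om. \<pi> x * tensor n S PM x y * h (restrict x (S i)) (restrict y (S i)))
        = (\<Sum>v\<in>Oi i. \<pi> x * PM i (restrict x (S i)) v * h (restrict x (S i)) v)" .
  qed
  also have "\<dots> = (\<Sum>u\<in>Oi i. \<Sum>x\<in>F i u. \<Sum>v\<in>Oi i. \<pi> x * PM i u v * h u v)"
    by (subst group[OF i]) (intro sum.cong refl, simp add: F_def)
  also have "\<dots> = (\<Sum>u\<in>Oi i. \<Sum>v\<in>Oi i. pim i u * PM i u v * h u v)"
    unfolding pim_def' by (simp add: sum.swap[of _ "F i _"] sum_distrib_right)
  finally show ?thesis .
qed

end

context kls begin

lemma TP_pos: assumes x: "x \<in> Om" and y: "y \<in> Om" and p: "P x y \<noteq> 0"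
  shows "tensor n S PM x y > 0"
proof -
  have "P x y > 0" using P_nonneg[OF x y] p by simp
  then show ?thesis unfolding tensor_def using PM_pos[OF _ x y] by (intro prod_pos) blast
qed

lemma TP_nonneg: assumes x: "x \<in> Om" and y: "y \<in> Om" shows "tensor n S PM x y \<ge> 0"
  unfolding tensor_def using PM_nonneg restr_in[OF x] by (intro prod_nonneg) blast

lemma KL_PTP: "KL Om \<pi> P (tensor n S PM) = ereal (\<Sum>x\<in>Om. \<Sum>y\<in>Om. \<pi> x * P x y * ln (P x y / tensor n S PM x y))"
proof -
  have "\<not> (\<exists>x\<in>Om. \<exists>y\<in>Om. \<pi> x * P x y \<noteq> 0 \<and> tensor n S PM x y = 0)"
  proof
    assume "\<exists>x\<in>Om. \<exists>y\<in>Om. \<pi> x * P x y \<noteq> 0 \<and> tensor n S PM x y = 0"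
    then obtain x y where "x \<in> Om" "y \<in> Om" "P x y \<noteq> 0" "tensor n S PM x y = 0" by auto
    then show False using TP_pos[of x y] by simp
  qed
  then show ?thesis unfolding KL_alt[OF fin_Om] by simp
qed

context
  fixes L :: "nat \<Rightarrow> (nat \<Rightarrow> 'a) \<Rightarrow> (nat \<Rightarrow> 'a) \<Rightarrow> real"
  assumes L_tm: "\<And>i. i \<in> {1..n} \<Longrightarrow> trans_matrix (Oi i) (L i)"
begin

lemma L_nonneg: "i \<in> {1..n} \<Longrightarrow> u \<in> Oi i \<Longrightarrow> v \<in> Oi i \<Longrightarrow> L i u v \<ge> 0"
  using L_tm by (auto simp: trans_matrix_def)

definition "G \<longleftrightarrow> (\<forall>i\<in>{1..n}. \<forall>u\<in>Oi i. \<forall>v\<in>Oi i. PM i u v \<noteq> 0 \<longrightarrow> L i u v \<noteq> 0)"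
definition "badi i \<longleftrightarrow> (\<exists>u\<in>Oi i. \<exists>v\<in>Oi i. pim i u * PM i u v \<noteq> 0 \<and> L i u v = 0)"

lemma badi_alt: assumes i: "i \<in> {1..n}"
  shows "badi i \<longleftrightarrow> (\<exists>u\<in>Oi i. \<exists>v\<in>Oi i. PM i u v \<noteq> 0 \<and> L i u v = 0)"
proof -
  have "pim i u * PM i u v \<noteq> 0 \<longleftrightarrow> PM i u v \<noteq> 0" if "u \<in> Oi i" for u v
    using pim_pos[OF i that] by simp
  then show ?thesis unfolding badi_def by blast
qed

lemma G_badi: "G \<longleftrightarrow> \<not> (\<exists>i\<in>{1..n}. badi i)"
  unfolding G_def using badi_alt by blast

lemma L_pos_G: assumes "G" "i \<in> {1..n}" "x \<in> Om" "y \<in> Om" "PM i (restrict x (S i)) (restrict y (S i)) \<noteq> 0"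
  shows "L i (restrict x (S i)) (restrict y (S i)) > 0"
proof -
  have u: "restrict x (S i) \<in> Oi i" and v: "restrict y (S i) \<in> Oi i" using restr_in assms by blast+
  have "L i (restrict x (S i)) (restrict y (S i)) \<noteq> 0" using assms(1,2,5) u v unfolding G_def by blast
  then show ?thesis using L_nonneg[OF assms(2) u v] by simp
qed

lemma notG: assumes "\<not> G"
  shows "\<exists>x\<in>Om. \<exists>y\<in>Om. P x y \<noteq> 0 \<and> tensor n S L x y = 0 \<and> tensor n S PM x y \<noteq> 0"
proof -
  obtain i u v where i: "i \<in> {1..n}" and u: "u \<in> Oi i" and v: "v \<in> Oi i"
    and nz: "PM i u v \<noteq> 0" and z: "L i u v = 0" using assms unfolding G_def by blast
  obtain x y where x: "x \<in> F i u" and y: "y \<in> F i v" and p: "P x y \<noteq> 0"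
    using PM_nz_ex[OF i u nz] by blast
  have xO: "x \<in> Om" and yO: "y \<in> Om" and xu: "restrict x (S i) = u" and yv: "restrict y (S i) = v"
    using x y by (auto simp: F_def)
  have "tensor n S L x y = 0" unfolding tensor_def using i xu yv z
    by (intro prod_zero) auto
  moreover have "tensor n S PM x y \<noteq> 0" using TP_pos[OF xO yO p] by simp
  ultimately show ?thesis using xO yO p by blast
qed

lemma TL_zero_k: assumes "tensor n S L x y = 0"
  shows "\<exists>k\<in>{1..n}. L k (restrict x (S k)) (restrict y (S k)) = 0"
  using assms unfolding tensor_def by (simp add: prod_zero_iff)

lemma KL_PTL: "KL Om \<pi> P (tensor n S L) = (if G then ereal (\<Sum>x\<in>Om. \<Sum>y\<in>Om. \<pi> x * P x y * ln (P x y / tensor n S L x y)) else \<infinity>)"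
proof -
  have "(\<exists>x\<in>Om. \<exists>y\<in>Om. \<pi> x * P x y \<noteq> 0 \<and> tensor n S L x y = 0) \<longleftrightarrow> \<not> G"
  proof
    assume "\<exists>x\<in>Om. \<exists>y\<in>Om. \<pi> x * P x y \<noteq> 0 \<and> tensor n S L x y = 0"
    then obtain x y where x: "x \<in> Om" and y: "y \<in> Om" and p: "P x y \<noteq> 0" and t: "tensor n S L x y = 0" by auto
    obtain k where k: "k \<in> {1..n}" and z: "L k (restrict x (S k)) (restrict y (S k)) = 0" using TL_zero_k[OF t] by blast
    have "P x y > 0" using P_nonneg[OF x y] p by simp
    from PM_pos[OF k x y this] have "PM k (restrict x (S k)) (restrict y (S k)) \<noteq> 0" by simp
    then show "\<not> G" using L_pos_G[OF _ k x y] z by auto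
  next
    assume "\<not> G" then show "\<exists>x\<in>Om. \<exists>y\<in>Om. \<pi> x * P x y \<noteq> 0 \<and> tensor n S L x y = 0"
    proof -
      assume "\<not> G"
      from notG[OF this] obtain x y where "x \<in> Om" "y \<in> Om" "P x y \<noteq> 0" "tensor n S L x y = 0" "tensor n S PM x y \<noteq> 0" by blast
      moreover have "\<pi> x \<noteq> 0" using pi_pos[OF \<open>x \<in> Om\<close>] by simp
      ultimately show ?thesis by auto
    qed
  qed
  then show ?thesis unfolding KL_alt[OF fin_Om] by simp
qed

lemma KL_TPTL: "KL Om \<pi> (tensor n S PM) (tensor n S L) = (if G then ereal (\<Sum>x\<in>Om. \<Sum>y\<in>Om. \<pi> x * tensor n S PM x y * ln (tensor n S PM x y / tensor n S L x y)) else \<infinity>)"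
proof -
  have "(\<exists>x\<in>Om. \<exists>y\<in>Om. \<pi> x * tensor n S PM x y \<noteq> 0 \<and> tensor n S L x y = 0) \<longleftrightarrow> \<not> G"
  proof
    assume "\<exists>x\<in>Om. \<exists>y\<in>Om. \<pi> x * tensor n S PM x y \<noteq> 0 \<and> tensor n S L x y = 0"
    then obtain x y where x: "x \<in> Om" and y: "y \<in> Om" and p: "tensor n S PM x y \<noteq> 0" and t: "tensor n S L x y = 0" by auto
    obtain k where k: "k \<in> {1..n}" and z: "L k (restrict x (S k)) (restrict y (S k)) = 0" using TL_zero_k[OF t] by blast
    have "PM k (restrict x (S k)) (restrict y (S k)) \<noteq> 0" using p k unfolding tensor_def by (auto simp: prod_zero_iff)
    then show "\<not> G" using L_pos_G[OF _ k x y] z by auto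
  next
    assume "\<not> G" then show "\<exists>x\<in>Om. \<exists>y\<in>Om. \<pi> x * tensor n S PM x y \<noteq> 0 \<and> tensor n S L x y = 0"
    proof -
      assume "\<not> G"
      from notG[OF this] obtain x y where "x \<in> Om" "y \<in> Om" "P x y \<noteq> 0" "tensor n S L x y = 0" "tensor n S PM x y \<noteq> 0" by blast
      moreover have "\<pi> x \<noteq> 0" using pi_pos[OF \<open>x \<in> Om\<close>] by simp
      ultimately show ?thesis by auto
    qed
  qed
  then show ?thesis unfolding KL_alt[OF fin_Om] by simp
qed

lemma KL_i: "i \<in> {1..n} \<Longrightarrow> KL (Oi i) (pim i) (PM i) (L i) = (if badi i then \<infinity> else ereal (\<Sum>u\<in>Oi i. \<Sum>v\<in>Oi i. pim i u * PM i u v * ln (PM i u v / L i u v)))"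
  by (simp add: KL_alt[OF fin_Oi] badi_def)


lemma sum_ln_div: "(\<And>k. k \<in> A \<Longrightarrow> a k > 0) \<Longrightarrow> (\<And>k. k \<in> A \<Longrightarrow> b k > 0) \<Longrightarrow>
  (\<Sum>k\<in>A. ln (a k / b k)) = (\<Sum>k\<in>A. ln (a k)) - (\<Sum>k\<in>A. ln (b k :: real))"
  by (simp add: ln_divide_pos sum_subtractf[symmetric])

lemma L_row: "i \<in> {1..n} \<Longrightarrow> u \<in> Oi i \<Longrightarrow> (\<Sum>v\<in>Oi i. L i u v) = 1"
  using L_tm by (auto simp: trans_matrix_def)

lemma idA: assumes g: G
  shows "(\<Sum>x\<in>Om. \<Sum>y\<in>Om. \<pi> x * P x y * ln (P x y / tensor n S L x y))
    = (\<Sum>x\<in>Om. \<Sum>y\<in>Om. \<pi> x * P x y * ln (P x y / tensor n S PM x y))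
      + (\<Sum>i\<in>{1..n}. \<Sum>u\<in>Oi i. \<Sum>v\<in>Oi i. pim i u * PM i u v * ln (PM i u v / L i u v))"
proof -
  have pt: "\<pi> x * P x y * ln (P x y / tensor n S L x y)
     = \<pi> x * P x y * ln (P x y / tensor n S PM x y)
       + (\<Sum>i\<in>{1..n}. \<pi> x * P x y * ln (PM i (restrict x (S i)) (restrict y (S i)) / L i (restrict x (S i)) (restrict y (S i))))"
    if x: "x \<in> Om" and y: "y \<in> Om" for x y
  proof (cases "P x y = 0")
    case True then show ?thesis by simp
  next
    case False
    then have p: "P x y > 0" using P_nonneg[OF x y] by simp
    have pm: "PM k (restrict x (S k)) (restrict y (S k)) > 0" if k: "k \<in> {1..n}" for k
      using PM_pos[OF k x y p] .
    have lk: "L k (restrict x (S k)) (restrict y (S k)) > 0" if k: "k \<in> {1..n}" for k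
      using L_pos_G[OF g k x y] pm[OF k] by simp
    have tp: "tensor n S PM x y > 0" and tl: "tensor n S L x y > 0"
      unfolding tensor_def using pm lk by (auto intro!: prod_pos)
    have lnL: "ln (tensor n S L x y) = (\<Sum>k\<in>{1..n}. ln (L k (restrict x (S k)) (restrict y (S k))))"
      unfolding tensor_def
    proof (rule ln_prod)
      fix k assume "k \<in> {1..n}" then show "L k (restrict x (S k)) (restrict y (S k)) \<noteq> 0" using lk by force
    qed simp
    have lnP: "ln (tensor n S PM x y) = (\<Sum>k\<in>{1..n}. ln (PM k (restrict x (S k)) (restrict y (S k))))"
      unfolding tensor_def
    proof (rule ln_prod)
      fix k assume "k \<in> {1..n}" then show "PM k (restrict x (S k)) (restrict y (S k)) \<noteq> 0" using pm by force
    qed simp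
    have e1: "ln (P x y / tensor n S L x y) = ln (P x y) - (\<Sum>k\<in>{1..n}. ln (L k (restrict x (S k)) (restrict y (S k))))"
      using ln_divide_pos[OF p tl] lnL by simp
    have e2: "ln (P x y / tensor n S PM x y) = ln (P x y) - (\<Sum>k\<in>{1..n}. ln (PM k (restrict x (S k)) (restrict y (S k))))"
      using ln_divide_pos[OF p tp] lnP by simp
    have e3: "(\<Sum>i\<in>{1..n}. \<pi> x * P x y * ln (PM i (restrict x (S i)) (restrict y (S i)) / L i (restrict x (S i)) (restrict y (S i))))
       = \<pi> x * P x y * ((\<Sum>k\<in>{1..n}. ln (PM k (restrict x (S k)) (restrict y (S k)))) - (\<Sum>k\<in>{1..n}. ln (L k (restrict x (S k)) (restrict y (S k)))))"
      unfolding sum_distrib_left[symmetric] using sum_ln_div[of "{1..n}", OF pm lk] by simp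
    show ?thesis unfolding e1 e2 e3 by (simp add: algebra_simps)
  qed
  have "(\<Sum>x\<in>Om. \<Sum>y\<in>Om. \<pi> x * P x y * ln (P x y / tensor n S L x y))
     = (\<Sum>x\<in>Om. \<Sum>y\<in>Om. \<pi> x * P x y * ln (P x y / tensor n S PM x y))
       + (\<Sum>x\<in>Om. \<Sum>y\<in>Om. \<Sum>i\<in>{1..n}. \<pi> x * P x y * ln (PM i (restrict x (S i)) (restrict y (S i)) / L i (restrict x (S i)) (restrict y (S i))))"
    using pt by (simp add: sum.distrib)
  also have "(\<Sum>x\<in>Om. \<Sum>y\<in>Om. \<Sum>i\<in>{1..n}. \<pi> x * P x y * ln (PM i (restrict x (S i)) (restrict y (S i)) / L i (restrict x (S i)) (restrict y (S i))))
     = (\<Sum>i\<in>{1..n}. \<Sum>x\<in>Om. \<Sum>y\<in>Om. \<pi> x * P x y * ln (PM i (restrict x (S i)) (restrict y (S i)) / L i (restrict x (S i)) (restrict y (S i))))"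
    by (subst sum.swap[of _ Om "{1..n}"], subst sum.swap, rule refl)
  also have "\<dots> = (\<Sum>i\<in>{1..n}. \<Sum>u\<in>Oi i. \<Sum>v\<in>Oi i. pim i u * PM i u v * ln (PM i u v / L i u v))"
    by (rule sum.cong[OF refl], rule CS)
  finally show ?thesis .
qed

lemma idB: assumes g: G
  shows "(\<Sum>x\<in>Om. \<Sum>y\<in>Om. \<pi> x * tensor n S PM x y * ln (tensor n S PM x y / tensor n S L x y))
    = (\<Sum>i\<in>{1..n}. \<Sum>u\<in>Oi i. \<Sum>v\<in>Oi i. pim i u * PM i u v * ln (PM i u v / L i u v))"
proof -
  have pt: "\<pi> x * tensor n S PM x y * ln (tensor n S PM x y / tensor n S L x y)
     = (\<Sum>i\<in>{1..n}. \<pi> x * tensor n S PM x y * ln (PM i (restrict x (S i)) (restrict y (S i)) / L i (restrict x (S i)) (restrict y (S i))))"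
    if x: "x \<in> Om" and y: "y \<in> Om" for x y
  proof (cases "tensor n S PM x y = 0")
    case True then show ?thesis by simp
  next
    case False
    have pm: "PM k (restrict x (S k)) (restrict y (S k)) > 0" if k: "k \<in> {1..n}" for k
    proof -
      have "PM k (restrict x (S k)) (restrict y (S k)) \<noteq> 0" using False k unfolding tensor_def by (auto simp: prod_zero_iff)
      then show ?thesis using PM_nonneg[OF k restr_in[OF x k], of "restrict y (S k)"] by (simp add: order_less_le)
    qed
    have lk: "L k (restrict x (S k)) (restrict y (S k)) > 0" if k: "k \<in> {1..n}" for k
      using L_pos_G[OF g k x y] pm[OF k] by simp
    have tp: "tensor n S PM x y > 0" and tl: "tensor n S L x y > 0"
      unfolding tensor_def using pm lk by (auto intro!: prod_pos)
    have lnL: "ln (tensor n S L x y) = (\<Sum>k\<in>{1..n}. ln (L k (restrict x (S k)) (restrict y (S k))))"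
      unfolding tensor_def
    proof (rule ln_prod)
      fix k assume "k \<in> {1..n}" then show "L k (restrict x (S k)) (restrict y (S k)) \<noteq> 0" using lk by force
    qed simp
    have lnP: "ln (tensor n S PM x y) = (\<Sum>k\<in>{1..n}. ln (PM k (restrict x (S k)) (restrict y (S k))))"
      unfolding tensor_def
    proof (rule ln_prod)
      fix k assume "k \<in> {1..n}" then show "PM k (restrict x (S k)) (restrict y (S k)) \<noteq> 0" using pm by force
    qed simp
    have "ln (tensor n S PM x y / tensor n S L x y) = (\<Sum>k\<in>{1..n}. ln (PM k (restrict x (S k)) (restrict y (S k)))) - (\<Sum>k\<in>{1..n}. ln (L k (restrict x (S k)) (restrict y (S k))))"
      using ln_divide_pos[OF tp tl] lnL lnP by simp
    also have "\<dots> = (\<Sum>k\<in>{1..n}. ln (PM k (restrict x (S k)) (restrict y (S k)) / L k (restrict x (S k)) (restrict y (S k))))"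
      using sum_ln_div[of "{1..n}", OF pm lk] by simp
    finally show ?thesis by (simp add: sum_distrib_left)
  qed
  have "(\<Sum>x\<in>Om. \<Sum>y\<in>Om. \<pi> x * tensor n S PM x y * ln (tensor n S PM x y / tensor n S L x y))
     = (\<Sum>x\<in>Om. \<Sum>y\<in>Om. \<Sum>i\<in>{1..n}. \<pi> x * tensor n S PM x y * ln (PM i (restrict x (S i)) (restrict y (S i)) / L i (restrict x (S i)) (restrict y (S i))))"
    using pt by simp
  also have "\<dots> = (\<Sum>i\<in>{1..n}. \<Sum>x\<in>Om. \<Sum>y\<in>Om. \<pi> x * tensor n S PM x y * ln (PM i (restrict x (S i)) (restrict y (S i)) / L i (restrict x (S i)) (restrict y (S i))))"
    by (subst sum.swap[of _ Om "{1..n}"], subst sum.swap, rule refl)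
  also have "\<dots> = (\<Sum>i\<in>{1..n}. \<Sum>u\<in>Oi i. \<Sum>v\<in>Oi i. pim i u * PM i u v * ln (PM i u v / L i u v))"
    by (rule sum.cong[OF refl], rule CS2)
  finally show ?thesis .
qed

lemma KLi_nonneg: assumes i: "i \<in> {1..n}"
  shows "KL (Oi i) (pim i) (PM i) (L i) \<ge> 0"
    and "KL (Oi i) (pim i) (PM i) (L i) = 0 \<Longrightarrow> \<forall>u\<in>Oi i. \<forall>v\<in>Oi i. L i u v = PM i u v"
proof -
  have main: "(\<Sum>u\<in>Oi i. \<Sum>v\<in>Oi i. pim i u * PM i u v * ln (PM i u v / L i u v)) \<ge> 0
    \<and> ((\<Sum>u\<in>Oi i. \<Sum>v\<in>Oi i. pim i u * PM i u v * ln (PM i u v / L i u v)) = 0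
        \<longrightarrow> (\<forall>u\<in>Oi i. \<forall>v\<in>Oi i. L i u v = PM i u v))" if nb: "\<not> badi i"
  proof -
    have gb: "(\<Sum>v\<in>Oi i. PM i u v * ln (PM i u v / L i u v)) \<ge> 0"
      "(\<Sum>v\<in>Oi i. PM i u v * ln (PM i u v / L i u v)) = 0 \<Longrightarrow> \<forall>v\<in>Oi i. PM i u v = L i u v"
      if u: "u \<in> Oi i" for u
    proof -
      have nz: "L i u v \<noteq> 0" if v: "v \<in> Oi i" and pz: "PM i u v \<noteq> 0" for v
      proof
        assume "L i u v = 0"
        then have "badi i" unfolding badi_alt[OF i] using u v pz by blast
        then show False using nb by simp
      qed
      show "(\<Sum>v\<in>Oi i. PM i u v * ln (PM i u v / L i u v)) \<ge> 0"
        "(\<Sum>v\<in>Oi i. PM i u v * ln (PM i u v / L i u v)) = 0 \<Longrightarrow> \<forall>v\<in>Oi i. PM i u v = L i u v"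
      proof -
        have h1: "\<And>a. a \<in> Oi i \<Longrightarrow> PM i u a \<ge> 0" using PM_nonneg[OF i u] by simp
        have h2: "\<And>a. a \<in> Oi i \<Longrightarrow> L i u a \<ge> 0" using L_nonneg[OF i u] by simp
        show "(\<Sum>v\<in>Oi i. PM i u v * ln (PM i u v / L i u v)) \<ge> 0"
          by (rule gibbs(1)[OF fin_Oi[OF i] h1 h2 PM_row[OF i u] L_row[OF i u] nz])
        show "(\<Sum>v\<in>Oi i. PM i u v * ln (PM i u v / L i u v)) = 0 \<Longrightarrow> \<forall>v\<in>Oi i. PM i u v = L i u v"
          by (rule gibbs(2)[OF fin_Oi[OF i] h1 h2 PM_row[OF i u] L_row[OF i u] nz])
      qed
    qed
    have re: "(\<Sum>u\<in>Oi i. \<Sum>v\<in>Oi i. pim i u * PM i u v * ln (PM i u v / L i u v))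
        = (\<Sum>u\<in>Oi i. pim i u * (\<Sum>v\<in>Oi i. PM i u v * ln (PM i u v / L i u v)))"
      by (simp add: sum_distrib_left mult.assoc)
    have tn: "\<And>u. u \<in> Oi i \<Longrightarrow> 0 \<le> pim i u * (\<Sum>v\<in>Oi i. PM i u v * ln (PM i u v / L i u v))"
      using gb(1) pim_pos[OF i] by (simp add: less_imp_le)
    show ?thesis
    proof
      show "(\<Sum>u\<in>Oi i. \<Sum>v\<in>Oi i. pim i u * PM i u v * ln (PM i u v / L i u v)) \<ge> 0"
        unfolding re using tn by (rule sum_nonneg)
      show "(\<Sum>u\<in>Oi i. \<Sum>v\<in>Oi i. pim i u * PM i u v * ln (PM i u v / L i u v)) = 0
        \<longrightarrow> (\<forall>u\<in>Oi i. \<forall>v\<in>Oi i. L i u v = PM i u v)"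
      proof (intro impI ballI)
        fix u v assume z: "(\<Sum>u\<in>Oi i. \<Sum>v\<in>Oi i. pim i u * PM i u v * ln (PM i u v / L i u v)) = 0"
          and u: "u \<in> Oi i" and v: "v \<in> Oi i"
        have z2: "(\<Sum>u\<in>Oi i. pim i u * (\<Sum>v\<in>Oi i. PM i u v * ln (PM i u v / L i u v))) = 0"
          using z re by simp
        have "pim i u * (\<Sum>v\<in>Oi i. PM i u v * ln (PM i u v / L i u v)) = 0"
          using sum_nonneg_0[OF fin_Oi[OF i] tn z2 u] .
        then have "(\<Sum>v\<in>Oi i. PM i u v * ln (PM i u v / L i u v)) = 0" using pim_pos[OF i u] by simp
        then show "L i u v = PM i u v" using gb(2)[OF u] v by simp
      qed
    qed
  qed
  show "KL (Oi i) (pim i) (PM i) (L i) \<ge> 0"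
  proof (cases "badi i")
    case True then show ?thesis unfolding KL_i[OF i] by simp
  next
    case False then show ?thesis unfolding KL_i[OF i] using main[OF False] by simp
  qed
  show "KL (Oi i) (pim i) (PM i) (L i) = 0 \<Longrightarrow> \<forall>u\<in>Oi i. \<forall>v\<in>Oi i. L i u v = PM i u v"
  proof (cases "badi i")
    case True then show "KL (Oi i) (pim i) (PM i) (L i) = 0 \<Longrightarrow> ?thesis" unfolding KL_i[OF i] by simp
  next
    case False then show "KL (Oi i) (pim i) (PM i) (L i) = 0 \<Longrightarrow> ?thesis" unfolding KL_i[OF i] using main[OF False] by simp
  qed
qed

lemma main_eqs:
  shows "KL Om \<pi> P (tensor n S L) = KL Om \<pi> P (tensor n S PM) + KL Om \<pi> (tensor n S PM) (tensor n S L)"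
    and "KL Om \<pi> (tensor n S PM) (tensor n S L) = (\<Sum>i\<in>{1..n}. KL (Oi i) (pim i) (PM i) (L i))"
proof -
  have "KL Om \<pi> P (tensor n S L) = KL Om \<pi> P (tensor n S PM) + KL Om \<pi> (tensor n S PM) (tensor n S L)
    \<and> KL Om \<pi> (tensor n S PM) (tensor n S L) = (\<Sum>i\<in>{1..n}. KL (Oi i) (pim i) (PM i) (L i))"
  proof (cases G)
    case True
    have "KL (Oi i) (pim i) (PM i) (L i) = ereal (\<Sum>u\<in>Oi i. \<Sum>v\<in>Oi i. pim i u * PM i u v * ln (PM i u v / L i u v))"
      if i: "i \<in> {1..n}" for i
      using KL_i[OF i] True G_badi i by auto
    then have s: "(\<Sum>i\<in>{1..n}. KL (Oi i) (pim i) (PM i) (L i))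
       = ereal (\<Sum>i\<in>{1..n}. \<Sum>u\<in>Oi i. \<Sum>v\<in>Oi i. pim i u * PM i u v * ln (PM i u v / L i u v))"
      by simp
    show ?thesis unfolding s KL_PTL KL_TPTL KL_PTP using True idA[OF True] idB[OF True] by simp
  next
    case False
    then obtain i where i: "i \<in> {1..n}" and b: "badi i" using G_badi by blast
    have "KL (Oi i) (pim i) (PM i) (L i) = \<infinity>" using KL_i[OF i] b by simp
    moreover have "(\<Sum>i\<in>{i}. KL (Oi i) (pim i) (PM i) (L i)) \<le> (\<Sum>i\<in>{1..n}. KL (Oi i) (pim i) (PM i) (L i))"
      using i KLi_nonneg(1) by (intro sum_mono2) auto
    ultimately have "(\<Sum>i\<in>{1..n}. KL (Oi i) (pim i) (PM i) (L i)) = \<infinity>" by simp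
    then show ?thesis unfolding KL_PTL KL_TPTL KL_PTP using False by simp
  qed
  then show "KL Om \<pi> P (tensor n S L) = KL Om \<pi> P (tensor n S PM) + KL Om \<pi> (tensor n S PM) (tensor n S L)"
    and "KL Om \<pi> (tensor n S PM) (tensor n S L) = (\<Sum>i\<in>{1..n}. KL (Oi i) (pim i) (PM i) (L i))" by auto
qed

end
end


theorem theorem2p22:
  fixes d n :: nat and X :: "nat \<Rightarrow> 'a set" and S :: "nat \<Rightarrow> nat set"
    and \<pi> :: "(nat \<Rightarrow> 'a) \<Rightarrow> real" and P :: "(nat \<Rightarrow> 'a) \<Rightarrow> (nat \<Rightarrow> 'a) \<Rightarrow> real"
    and L :: "nat \<Rightarrow> (nat \<Rightarrow> 'a) \<Rightarrow> (nat \<Rightarrow> 'a) \<Rightarrow> real"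
  assumes finX: "\<And>j. j \<in> {1..d} \<Longrightarrow> finite (X j)"
    and S_nonempty: "\<And>i. i \<in> {1..n} \<Longrightarrow> S i \<noteq> {}"
    and S_disj: "\<And>i k. i \<in> {1..n} \<Longrightarrow> k \<in> {1..n} \<Longrightarrow> i \<noteq> k \<Longrightarrow> S i \<inter> S k = {}"
    and S_cover: "(\<Union>i\<in>{1..n}. S i) = {1..d}"
    and pi_mass: "prob_mass (PiE {1..d} X) \<pi>"
    and pi_pos: "\<And>x. x \<in> PiE {1..d} X \<Longrightarrow> \<pi> x > 0"
    and P_tm: "trans_matrix (PiE {1..d} X) P"
    and L_tm: "\<And>i. i \<in> {1..n} \<Longrightarrow> trans_matrix (PiE (S i) X) (L i)"
  defines "\<Omega> \<equiv> PiE {1..d} X"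
    and "Pm \<equiv> (\<lambda>i. marg_P d X (S i) \<pi> P)"
  shows
    "KL \<Omega> \<pi> P (tensor n S L)
       = KL \<Omega> \<pi> P (tensor n S Pm) + KL \<Omega> \<pi> (tensor n S Pm) (tensor n S L)
     \<and> KL \<Omega> \<pi> (tensor n S Pm) (tensor n S L)
       = (\<Sum>i\<in>{1..n}. KL (PiE (S i) X) (marg_pi d X (S i) \<pi>) (Pm i) (L i))
     \<and> (\<forall>i\<in>{1..n}. trans_matrix (PiE (S i) X) (Pm i))
     \<and> (\<forall>L'. (\<forall>i\<in>{1..n}. trans_matrix (PiE (S i) X) (L' i)) \<longrightarrow>
           KL \<Omega> \<pi> P (tensor n S Pm) \<le> KL \<Omega> \<pi> P (tensor n S L')
         \<and> (KL \<Omega> \<pi> P (tensor n S L') = KL \<Omega> \<pi> P (tensor n S Pm) \<longrightarrow>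
              (\<forall>i\<in>{1..n}. \<forall>u\<in>PiE (S i) X. \<forall>v\<in>PiE (S i) X. L' i u v = Pm i u v)))
     \<and> KL \<Omega> \<pi> P (tensor n S Pm)
       = (INF L'\<in>{L'. \<forall>i\<in>{1..n}. trans_matrix (PiE (S i) X) (L' i)}. KL \<Omega> \<pi> P (tensor n S L'))"
proof -
  interpret kls d n X S \<pi> P
    by (rule kls.intro[OF finX S_disj S_cover pi_mass pi_pos P_tm])
  have Om: "\<Omega> = Om" by (simp add: \<Omega>_def)
  have Pm: "Pm = PM" by (simp add: Pm_def)
  have c1: "KL Om \<pi> P (tensor n S L) = KL Om \<pi> P (tensor n S PM) + KL Om \<pi> (tensor n S PM) (tensor n S L)"
    by (rule main_eqs(1)[OF L_tm])
  have c2: "KL Om \<pi> (tensor n S PM) (tensor n S L) = (\<Sum>i\<in>{1..n}. KL (Oi i) (pim i) (PM i) (L i))"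
    by (rule main_eqs(2)[OF L_tm])
  have c3: "\<forall>i\<in>{1..n}. trans_matrix (Oi i) (PM i)" using PM_tm by blast
  have c4: "KL Om \<pi> P (tensor n S PM) \<le> KL Om \<pi> P (tensor n S L')
         \<and> (KL Om \<pi> P (tensor n S L') = KL Om \<pi> P (tensor n S PM) \<longrightarrow>
              (\<forall>i\<in>{1..n}. \<forall>u\<in>Oi i. \<forall>v\<in>Oi i. L' i u v = PM i u v))"
    if H: "\<forall>i\<in>{1..n}. trans_matrix (Oi i) (L' i)" for L'
  proof -
    have Lt: "\<And>i. i \<in> {1..n} \<Longrightarrow> trans_matrix (Oi i) (L' i)" using H by blast
    define s where "s = (\<Sum>i\<in>{1..n}. KL (Oi i) (pim i) (PM i) (L' i))"
    have e: "KL Om \<pi> P (tensor n S L') = KL Om \<pi> P (tensor n S PM) + s"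
      unfolding s_def using main_eqs(1)[OF Lt] main_eqs(2)[OF Lt] by simp
    have nn: "\<And>i. i \<in> {1..n} \<Longrightarrow> KL (Oi i) (pim i) (PM i) (L' i) \<ge> 0"
      using KLi_nonneg(1)[OF Lt] by blast
    have s0: "s \<ge> 0" unfolding s_def using nn by (rule sum_nonneg)
    show ?thesis
    proof
      show "KL Om \<pi> P (tensor n S PM) \<le> KL Om \<pi> P (tensor n S L')"
        unfolding e using s0 by (rule add_increasing2) simp
      show "KL Om \<pi> P (tensor n S L') = KL Om \<pi> P (tensor n S PM) \<longrightarrow>
              (\<forall>i\<in>{1..n}. \<forall>u\<in>Oi i. \<forall>v\<in>Oi i. L' i u v = PM i u v)"
      proof (intro impI ballI)
        fix i u v assume eq: "KL Om \<pi> P (tensor n S L') = KL Om \<pi> P (tensor n S PM)"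
          and i: "i \<in> {1..n}" and u: "u \<in> Oi i" and v: "v \<in> Oi i"
        obtain c where c: "KL Om \<pi> P (tensor n S PM) = ereal c" using KL_PTP by blast
        have "ereal c + s = ereal c" using eq e c by simp
        then have "s = 0" using s0 by (cases s) auto
        then have "KL (Oi i) (pim i) (PM i) (L' i) = 0"
          using sum_nonneg_0[OF _ nn _ i] unfolding s_def by simp
        then show "L' i u v = PM i u v" using KLi_nonneg(2)[OF Lt i] u v by blast
      qed
    qed
  qed
  have c5: "KL Om \<pi> P (tensor n S PM)
       = (INF L'\<in>{L'. \<forall>i\<in>{1..n}. trans_matrix (Oi i) (L' i)}. KL Om \<pi> P (tensor n S L'))"
  proof (rule antisym)
    show "KL Om \<pi> P (tensor n S PM) \<le> (INF L'\<in>{L'. \<forall>i\<in>{1..n}. trans_matrix (Oi i) (L' i)}. KL Om \<pi> P (tensor n S L'))"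
      using c4 by (intro INF_greatest) blast
    show "(INF L'\<in>{L'. \<forall>i\<in>{1..n}. trans_matrix (Oi i) (L' i)}. KL Om \<pi> P (tensor n S L')) \<le> KL Om \<pi> P (tensor n S PM)"
      using c3 by (intro INF_lower) simp
  qed
  show ?thesis unfolding Om Pm using c1 c2 c3 c4 c5 by blast
qed


end
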